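(* Let $q$ be a power of $2$ and $v\ge1$ an integer. In the affine space $AG(2v,q)$ over $\mathbb{F}_q$ let $K=\{(a_1,a_1^2,a_2,a_2^2,\dots,a_v,a_v^2): a_1,\dots,a_v\in\mathbb{F}_q\}$ and $A=AG(2v,q)\setminus K$. Then for every point $X\in A$, the number of lines of $AG(2v,q)$ through $X$ that are entirely contained in $A$ equals $B_{q,v}-q^v+\frac12(q-2)$, where $B_{q,v}=\frac{q^{2v}-1}{q-1}$.
   Context: Points of $AG(2v,q)$ are the vectors of $\mathbb{F}_q^{2v}$, and lines are the cosets of 1-dimensional subspaces; $B_{q,v}=(q^{2v}-1)/(q-1)$ is the number of lines through any point. *)

theory Defs
  imports Complex_Main
begin

definition ag_points :: "nat \<Rightarrow> 'a::field list set" where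
  "ag_points n = {x. length x = n}"

definition vadd :: "'a::field list \<Rightarrow> 'a list \<Rightarrow> 'a list" where
  "vadd x y = map2 (+) x y"

definition vscale :: "'a::field \<Rightarrow> 'a list \<Rightarrow> 'a list" where
  "vscale t x = map ((*) t) x"

definition ag_line :: "nat \<Rightarrow> 'a::field list set \<Rightarrow> bool" where
  "ag_line n L \<longleftrightarrow> (\<exists>p d. length p = n \<and> length d = n \<and> d \<noteq> replicate n 0 \<and>
      L = {vadd p (vscale t d) | t. True})"

text \<open>K = {(a1,a1^2,...,av,av^2)}, 0-indexed: coordinate 2i+1 is square of coordinate 2i.\<close>
definition setK :: "nat \<Rightarrow> 'a::field list set" where
  "setK v = {x. length x = 2*v \<and> (\<forall>i<v. x ! (2*i+1) = (x ! (2*i))^2)}"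

definition setA :: "nat \<Rightarrow> 'a::field list set" where
  "setA v = ag_points (2*v) - setK v"

end

theory Submission
  imports Defs
begin

lemma length_vadd[simp]: "length (vadd x y) = min (length x) (length y)"
  by (simp add: vadd_def)
lemma nth_vadd[simp]: "j < length x \<Longrightarrow> j < length y \<Longrightarrow> vadd x y ! j = x!j + y!j"
  by (simp add: vadd_def)
lemma length_vscale[simp]: "length (vscale t x) = length x"
  by (simp add: vscale_def)
lemma nth_vscale[simp]: "j < length x \<Longrightarrow> vscale t x ! j = t * x!j"
  by (simp add: vscale_def)

definition vsub :: "'a::field list \<Rightarrow> 'a list \<Rightarrow> 'a list" where
  "vsub x y = map2 (-) x y"
lemma length_vsub[simp]: "length (vsub x y) = min (length x) (length y)"
  by (simp add: vsub_def)
lemma nth_vsub[simp]: "j < length x \<Longrightarrow> j < length y \<Longrightarrow> vsub x y ! j = x!j - y!j"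
  by (simp add: vsub_def)

lemma vadd_combine: "length p = length d \<Longrightarrow>
  vadd (vadd p (vscale a d)) (vscale b d) = vadd p (vscale (a+b) d)"
  by (rule nth_equalityI) (auto simp: algebra_simps)

lemma vadd_zero: "length p = length d \<Longrightarrow> vadd p (vscale 0 d) = p"
  by (rule nth_equalityI) auto

lemma vscale_vscale: "vscale a (vscale b d) = vscale (a*b) d"
  by (rule nth_equalityI) auto

definition line :: "'a::field list \<Rightarrow> 'a list \<Rightarrow> 'a list set" where
  "line X d = {vadd X (vscale t d) | t. True}"

definition Tset :: "nat \<Rightarrow> 'a::field list \<Rightarrow> 'a list \<Rightarrow> 'a set" where
  "Tset v X d = {t. t \<noteq> 0 \<and> vadd X (vscale t d) \<in> setK v}"

definition cc :: "'a::field list \<Rightarrow> nat \<Rightarrow> 'a" where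
  "cc X i = X!(2*i+1) - (X!(2*i))^2"

definition OD :: "'b set \<Rightarrow> ('b \<times> 'b) set" where
  "OD S = {(a,b). a \<in> S \<and> b \<in> S \<and> a \<noteq> b}"

lemma coord_eq:
  fixes x0 :: "'a::field"
  assumes "(2::'a) = 0"
  shows "(x1 + t*e = (x0 + t*f)^2) \<longleftrightarrow> (x1 - x0^2 + t*e - t^2*f^2 = 0)"
proof -
  have "(x0 + t*f)^2 = x0^2 + t^2*f^2 + 2*(x0*t*f)" by (simp add: power2_eq_square algebra_simps)
  also have "\<dots> = x0^2 + t^2*f^2" using assms by simp
  finally show ?thesis by (auto simp: algebra_simps)
qed

lemma pair_eq:
  fixes c :: "'a::field"
  assumes "t1 \<noteq> t2"
  shows "(c + t1*e - t1^2*F = 0 \<and> c + t2*e - t2^2*F = 0) \<longleftrightarrow> (e = (t1+t2)*F \<and> c + t1*t2*F = 0)"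
proof
  assume h: "c + t1*e - t1^2*F = 0 \<and> c + t2*e - t2^2*F = 0"
  have "(t1 - t2) * (e - (t1+t2)*F) = (c + t1*e - t1^2*F) - (c + t2*e - t2^2*F)"
    by (simp add: power2_eq_square algebra_simps)
  also have "\<dots> = 0" using h by simp
  finally have e: "e = (t1+t2)*F" using assms by simp
  have "c + t1*t2*F = c + t1*e - t1^2*F" by (simp add: e power2_eq_square algebra_simps)
  with h e show "e = (t1+t2)*F \<and> c + t1*t2*F = 0" by simp
next
  assume h: "e = (t1+t2)*F \<and> c + t1*t2*F = 0"
  have "c + t1*e - t1^2*F = c + t1*t2*F" "c + t2*e - t2^2*F = c + t1*t2*F"
    using h by (simp_all add: power2_eq_square algebra_simps)
  with h show "c + t1*e - t1^2*F = 0 \<and> c + t2*e - t2^2*F = 0" by simp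
qed

lemma sq_inj:
  fixes a :: "'a::field"
  assumes "(2::'a) = 0" "a^2 = b^2"
  shows "a = b"
proof -
  have "(a-b)^2 = a^2 - b^2 + 2*(b^2 - a*b)" by (simp add: power2_eq_square algebra_simps)
  also have "\<dots> = 0" using assms by simp
  finally show ?thesis by simp
qed

definition sq2 :: "'a::{finite,field} \<Rightarrow> 'a" where
  "sq2 = inv (\<lambda>x. x^2)"

lemma sq2_sq:
  assumes "(2::'a::{finite,field}) = 0"
  shows "(sq2 (y::'a))^2 = y"
proof -
  have "inj (\<lambda>x::'a. x^2)" using sq_inj[OF assms] by (auto intro: injI)
  hence "surj (\<lambda>x::'a. x^2)" by (simp add: finite_UNIV_inj_surj)
  from surj_f_inv_f[OF this, of y] show ?thesis unfolding sq2_def by simp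
qed


context
  fixes v :: nat and X :: "'a::{finite,field} list"
  assumes char2: "(2::'a) = 0" and lenX: "length X = 2*v" and XnK: "X \<notin> setK v"
begin

lemma inK_iff:
  assumes "length d = 2*v"
  shows "vadd X (vscale t d) \<in> setK v \<longleftrightarrow>
    (\<forall>i<v. cc X i + t * d!(2*i+1) - t^2 * (d!(2*i))^2 = 0)"
proof -
  have "vadd X (vscale t d) \<in> setK v \<longleftrightarrow>
     (\<forall>i<v. X!(2*i+1) + t * d!(2*i+1) = (X!(2*i) + t * d!(2*i))^2)"
    using assms lenX by (simp add: setK_def)
  also have "\<dots> \<longleftrightarrow> (\<forall>i<v. cc X i + t * d!(2*i+1) - t^2 * (d!(2*i))^2 = 0)"
    using coord_eq[OF char2] by (simp add: cc_def power_mult_distrib)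
  finally show ?thesis .
qed

lemma exists_cc: "\<exists>i<v. cc X i \<noteq> 0"
proof (rule ccontr)
  assume "\<not> ?thesis"
  hence "\<forall>i<v. X!(2*i+1) = (X!(2*i))^2" by (auto simp: cc_def)
  with lenX XnK show False by (auto simp: setK_def)
qed

lemma pair_iff:
  assumes "length d = 2*v" "t1 \<noteq> t2"
  shows "(t1 \<in> Tset v X d \<and> t2 \<in> Tset v X d) \<longleftrightarrow> t1 \<noteq> 0 \<and> t2 \<noteq> 0 \<and>
     (\<forall>i<v. d!(2*i+1) = (t1+t2)*(d!(2*i))^2 \<and> cc X i + t1*t2*(d!(2*i))^2 = 0)"
proof -
  have "(t1 \<in> Tset v X d \<and> t2 \<in> Tset v X d) \<longleftrightarrow> t1 \<noteq> 0 \<and> t2 \<noteq> 0 \<and>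
     (\<forall>i<v. cc X i + t1 * d!(2*i+1) - t1^2 * (d!(2*i))^2 = 0 \<and>
            cc X i + t2 * d!(2*i+1) - t2^2 * (d!(2*i))^2 = 0)"
    unfolding Tset_def using inK_iff[OF assms(1)] by auto
  also have "\<dots> \<longleftrightarrow> t1 \<noteq> 0 \<and> t2 \<noteq> 0 \<and>
     (\<forall>i<v. d!(2*i+1) = (t1+t2)*(d!(2*i))^2 \<and> cc X i + t1*t2*(d!(2*i))^2 = 0)"
    using pair_eq[OF assms(2)] by simp
  finally show ?thesis .
qed

lemma three:
  assumes "length d = 2*v" "t1 \<in> Tset v X d" "t2 \<in> Tset v X d" "t3 \<in> Tset v X d"
    "t1 \<noteq> t2" "t1 \<noteq> t3"
  shows "t2 = t3"
proof (rule ccontr)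
  assume ne: "t2 \<noteq> t3"
  obtain i where i: "i < v" "cc X i \<noteq> 0" using exists_cc by blast
  have h1: "t1 \<noteq> 0" "cc X i + t1*t2*(d!(2*i))^2 = 0"
    using pair_iff[OF assms(1) assms(5)] assms(2,3) i(1) by auto
  have h2: "cc X i + t1*t3*(d!(2*i))^2 = 0"
    using pair_iff[OF assms(1) assms(6)] assms(2,4) i(1) by auto
  have "t1*(t2-t3)*(d!(2*i))^2 = (cc X i + t1*t2*(d!(2*i))^2) - (cc X i + t1*t3*(d!(2*i))^2)"
    by (simp add: algebra_simps)
  also have "\<dots> = 0" using h1(2) h2 by simp
  finally have "t1*(t2-t3)*(d!(2*i))^2 = 0" .
  hence "(d!(2*i))^2 = 0" using h1(1) ne by simp
  with h1(2) i(2) show False by simp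
qed

lemma card_T_le2:
  assumes "length d = 2*v"
  shows "card (Tset v X d) \<le> 2"
proof (cases "\<exists>a b. a \<in> Tset v X d \<and> b \<in> Tset v X d \<and> a \<noteq> b")
  case True
  then obtain a b where ab: "a \<in> Tset v X d" "b \<in> Tset v X d" "a \<noteq> b" by blast
  have "Tset v X d \<subseteq> {a,b}"
  proof
    fix c assume c: "c \<in> Tset v X d"
    show "c \<in> {a,b}"
    proof (rule ccontr)
      assume "c \<notin> {a,b}"
      hence "b = c" using three[OF assms ab(1) ab(2) c] ab(3) by auto
      with \<open>c \<notin> {a,b}\<close> show False by simp
    qed
  qed
  hence "card (Tset v X d) \<le> card {a,b}" by (intro card_mono) auto
  also have "\<dots> \<le> 2" by (simp add: card_insert_if)
  finally show ?thesis .
next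
  case False
  hence "card (Tset v X d) \<le> Suc 0" by (subst card_le_Suc0_iff_eq) auto
  thus ?thesis by simp
qed

lemma per_d:
  assumes "length d = 2*v"
  shows "real (card (Tset v X d)) - real (card (OD (Tset v X d))) / 2
       = (if Tset v X d = {} then 0 else 1)"
proof -
  let ?T = "Tset v X d"
  have "card ?T = 0 \<or> card ?T = 1 \<or> card ?T = 2" using card_T_le2[OF assms] by linarith
  moreover
  { assume "card ?T = 0" hence "?T = {}" by simp
    hence ?thesis by (simp add: OD_def) }
  moreover
  { assume "card ?T = 1" then obtain a where "?T = {a}" by (auto simp: card_1_singleton_iff)
    hence ?thesis by (simp add: OD_def) }
  moreover
  { assume "card ?T = 2" then obtain a b where ab: "?T = {a,b}" "a \<noteq> b"
      by (auto simp: card_2_iff)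
    hence "OD ?T = {(a,b),(b,a)}" by (auto simp: OD_def)
    hence ?thesis using ab by simp }
  ultimately show ?thesis by blast
qed

end

lemma card_lists: "card {d::'a::finite list. length d = n} = card (UNIV::'a set)^n"
  using card_lists_length_eq[of "UNIV::'a set" n] by simp

lemma finite_lists: "finite {d::'a::finite list. length d = n}"
  using finite_lists_length_eq[of "UNIV::'a set" n] by simp

definition Dset :: "nat \<Rightarrow> 'a::field list set" where
  "Dset n = {d. length d = n \<and> d \<noteq> replicate n 0}"

lemma finite_Dset: "finite (Dset n :: 'a::{finite,field} list set)"
  unfolding Dset_def by (rule finite_subset[OF _ finite_lists[of n]]) auto

lemma card_Dset: "card (Dset n :: 'a::{finite,field} list set) = card (UNIV::'a set)^n - 1"
proof -
  have "Dset n = {d::'a list. length d = n} - {replicate n 0}" by (auto simp: Dset_def)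
  thus ?thesis by (simp add: card_lists finite_lists)
qed

lemma card_K: "card (setK v :: 'a::{finite,field} list set) = card (UNIV::'a set)^v"
proof -
  note [[show_types]]
  let ?h = "\<lambda>x::'a list. map (\<lambda>i. x!(2*i)) [0..<v]"
  let ?h' = "\<lambda>a::'a list. map (\<lambda>j. if even j then a!(j div 2) else (a!(j div 2))^2) [0..<2*v]"
  have "bij_betw ?h (setK v) {a. length a = v}"
  proof (rule bij_betw_byWitness[where f'="?h'"])
    show "\<forall>x\<in>(setK v::'a list set). ?h' (?h x) = x"
    proof
      fix x :: "'a list" assume x: "x \<in> setK v"
      show "?h' (?h x) = x"
      proof (rule nth_equalityI)
        show "length (?h' (?h x)) = length x" using x by (simp add: setK_def)
        fix j assume j: "j < length (?h' (?h x))"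
        hence jv: "j div 2 < v" "j < 2*v" by auto
        show "?h' (?h x) ! j = x ! j"
        proof (cases "even j")
          case True
          then show ?thesis using jv by (auto elim!: evenE)
        next
          case False
          then obtain i where i: "j = 2*i+1" by (auto elim!: oddE)
          with jv x show ?thesis by (auto simp: setK_def)
        qed
      qed
    qed
    show "\<forall>a\<in>{a. length a = v}. ?h (?h' a) = a"
      by (auto intro!: nth_equalityI)
    show "?h ` setK v \<subseteq> {a. length a = v}" by auto
    show "?h' ` {a. length a = v} \<subseteq> setK v"
      by (auto simp: setK_def)
  qed
  hence "card (setK v :: 'a list set) = card {a::'a list. length a = v}" by (rule bij_betw_same_card)
  thus ?thesis by (simp add: card_lists)
qed


context
  fixes v :: nat and X :: "'a::{finite,field} list"
  assumes char2: "(2::'a) = 0" and lenX: "length X = 2*v" and XnK: "X \<notin> setK v"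
begin

lemmas pair_iff' = pair_iff[OF char2 lenX XnK]
lemmas exists_cc' = exists_cc[OF char2 lenX XnK]

lemma sum_T: "(\<Sum>d\<in>Dset (2*v). card (Tset v X d)) = (card (UNIV::'a set) - 1) * card (UNIV::'a set)^v"
proof -
  let ?S = "SIGMA d:Dset (2*v). Tset v X d"
  let ?f = "\<lambda>(d,t). (t, vadd X (vscale t d))"
  let ?g = "\<lambda>(t::'a,k). (vscale (1/t) (vsub k X), t)"
  have "bij_betw ?f ?S ((UNIV - {0::'a}) \<times> (setK v :: 'a list set))"
  proof (rule bij_betw_byWitness[where f'="?g"])
    show "\<forall>a\<in>?S. ?g (?f a) = a"
    proof
      fix a assume "a \<in> ?S"
      then obtain d :: "'a list" and t where a: "a = (d,t)" "length d = 2*v" "t \<noteq> 0"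
        by (auto simp: Dset_def Tset_def)
      have "vscale (1/t) (vsub (vadd X (vscale t d)) X) = d"
        by (rule nth_equalityI) (use a lenX in auto)
      thus "?g (?f a) = a" using a by simp
    qed
    show "\<forall>a\<in>(UNIV - {0::'a}) \<times> (setK v :: 'a list set). ?f (?g a) = a"
    proof
      fix a assume "a \<in> (UNIV - {0::'a}) \<times> (setK v :: 'a list set)"
      then obtain t and k :: "'a list" where a: "a = (t,k)" "length k = 2*v" "t \<noteq> 0" "k \<in> setK v"
        by (auto simp: setK_def)
      have "vadd X (vscale t (vscale (1/t) (vsub k X))) = k"
        by (rule nth_equalityI) (use a lenX in auto)
      thus "?f (?g a) = a" using a by simp
    qed
    show "?f ` ?S \<subseteq> (UNIV - {0::'a}) \<times> (setK v :: 'a list set)" by (auto simp: Tset_def)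
    show "?g ` ((UNIV - {0::'a}) \<times> (setK v :: 'a list set)) \<subseteq> ?S"
    proof
      fix b assume "b \<in> ?g ` ((UNIV - {0::'a}) \<times> (setK v :: 'a list set))"
      then obtain t and k :: "'a list" where b: "b = ?g (t,k)" "length k = 2*v" "t \<noteq> 0" "k \<in> setK v"
        by (auto simp: setK_def)
      let ?d = "vscale (1/t) (vsub k X)"
      have e: "vadd X (vscale t ?d) = k"
        by (rule nth_equalityI) (use b lenX in auto)
      have "?d \<noteq> replicate (2*v) 0"
      proof
        assume "?d = replicate (2*v) 0"
        hence "vadd X (vscale t ?d) = X" using lenX by (auto intro!: nth_equalityI)
        with e b XnK show False by simp
      qed
      thus "b \<in> ?S" using b e lenX by (auto simp: Dset_def Tset_def)
    qed
  qed
  hence "card ?S = card ((UNIV - {0::'a}) \<times> (setK v :: 'a list set))" by (rule bij_betw_same_card)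
  also have "\<dots> = (card (UNIV::'a set) - 1) * card (UNIV::'a set)^v"
    by (simp add: card_cartesian_product card_K)
  finally have "card ?S = (card (UNIV::'a set) - 1) * card (UNIV::'a set)^v" .
  moreover have "card ?S = (\<Sum>d\<in>Dset (2*v). card (Tset v X d))"
    by (rule card_SigmaI) (auto simp: finite_Dset)
  ultimately show ?thesis by simp
qed

lemma uniq_d:
  assumes "length d = 2*v" "length d' = 2*v" "t1 \<noteq> t2"
    "t1 \<in> Tset v X d" "t2 \<in> Tset v X d" "t1 \<in> Tset v X d'" "t2 \<in> Tset v X d'"
  shows "d = d'"
proof -
  have A: "t1 \<noteq> 0" "t2 \<noteq> 0" "\<forall>i<v. d!(2*i+1) = (t1+t2)*(d!(2*i))^2 \<and> cc X i + t1*t2*(d!(2*i))^2 = 0"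
    using pair_iff'[OF assms(1,3)] assms(4,5) by auto
  have B: "\<forall>i<v. d'!(2*i+1) = (t1+t2)*(d'!(2*i))^2 \<and> cc X i + t1*t2*(d'!(2*i))^2 = 0"
    using pair_iff'[OF assms(2,3)] assms(6,7) by auto
  have ev: "d!(2*i) = d'!(2*i)" if "i < v" for i
  proof -
    have "t1*t2*(d!(2*i))^2 = t1*t2*(d'!(2*i))^2" using A(3) B that
      by (metis add_left_cancel)
    hence "(d!(2*i))^2 = (d'!(2*i))^2" using A(1,2) by simp
    thus ?thesis by (rule sq_inj[OF char2])
  qed
  have od: "d!(2*i+1) = d'!(2*i+1)" if "i < v" for i
    using A(3) B ev[OF that] that by simp
  show ?thesis
  proof (rule nth_equalityI)
    show "length d = length d'" using assms by simp
    fix j assume j: "j < length d"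
    show "d!j = d'!j"
    proof (cases "even j")
      case True then obtain i where "j = 2*i" by (auto elim!: evenE)
      with j assms(1) ev show ?thesis by simp
    next
      case False then obtain i where "j = 2*i+1" by (auto elim!: oddE)
      with j assms(1) od show ?thesis by simp
    qed
  qed
qed

lemma exists_d:
  assumes "t1 \<noteq> 0" "t2 \<noteq> 0" "t1 \<noteq> t2"
  shows "\<exists>d\<in>Dset (2*v). t1 \<in> Tset v X d \<and> t2 \<in> Tset v X d"
proof -
  define s where "s i = sq2 (- cc X i / (t1*t2))" for i
  define d where "d = map (\<lambda>j. if even j then s (j div 2) else (t1+t2)*(s (j div 2))^2) [0..<2*v]"
  have ld: "length d = 2*v" by (simp add: d_def)
  have d0: "d!(2*i) = s i" if "i < v" for i using that by (simp add: d_def)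
  have d1: "d!(2*i+1) = (t1+t2)*(s i)^2" if "i < v" for i using that by (simp add: d_def)
  have ss: "(s i)^2 = - cc X i / (t1*t2)" for i unfolding s_def by (rule sq2_sq[OF char2])
  have "\<forall>i<v. d!(2*i+1) = (t1+t2)*(d!(2*i))^2 \<and> cc X i + t1*t2*(d!(2*i))^2 = 0"
    using assms by (simp add: d0 d1[simplified] ss)
  hence T: "t1 \<in> Tset v X d \<and> t2 \<in> Tset v X d"
    using pair_iff'[OF ld assms(3)] assms by simp
  obtain i where i: "i < v" "cc X i \<noteq> 0" using exists_cc' by blast
  have "s i \<noteq> 0"
  proof
    assume "s i = 0"
    hence "- cc X i / (t1*t2) = 0" using ss[of i] by simp
    with i assms show False by simp
  qed
  hence "d \<noteq> replicate (2*v) 0" using d0[OF i(1)] i(1) by auto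
  with T ld show ?thesis by (auto simp: Dset_def)
qed

lemma sum_OD: "(\<Sum>d\<in>Dset (2*v). card (OD (Tset v X d))) =
   (card (UNIV::'a set) - 1) * (card (UNIV::'a set) - 2)"
proof -
  let ?S = "SIGMA d:Dset (2*v). OD (Tset v X d)"
  let ?P = "SIGMA a:(UNIV - {0::'a}). (UNIV - {0,a})"
  have inj: "inj_on snd ?S"
  proof (rule inj_onI)
    fix x y assume x: "x \<in> ?S" and y: "y \<in> ?S" and e: "snd x = snd y"
    obtain d t1 t2 where xx: "x = (d,(t1,t2))" by (metis prod.collapse)
    obtain d' where yy: "y = (d',(t1,t2))" using e xx by (metis prod.collapse snd_conv)
    have "d = d'"
      by (rule uniq_d) (use x y xx yy in \<open>auto simp: Dset_def OD_def\<close>)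
    thus "x = y" using xx yy by simp
  qed
  have img: "snd ` ?S = ?P"
  proof
    show "snd ` ?S \<subseteq> ?P" by (auto simp: OD_def Tset_def)
    show "?P \<subseteq> snd ` ?S"
    proof
      fix p assume p: "p \<in> ?P"
      then obtain t1 t2 where pp: "p = (t1,t2)" "t1 \<noteq> 0" "t2 \<noteq> 0" "t1 \<noteq> t2" by auto
      obtain d where "d \<in> Dset (2*v)" "t1 \<in> Tset v X d" "t2 \<in> Tset v X d"
        using exists_d[OF pp(2-4)] by blast
      hence "(d,p) \<in> ?S" using pp by (auto simp: OD_def)
      thus "p \<in> snd ` ?S" by force
    qed
  qed
  have "card ?S = card ?P" using card_image[OF inj] img by simp
  also have "card ?P = (\<Sum>a\<in>UNIV - {0::'a}. card (UNIV - {0,a}))" by (rule card_SigmaI) auto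
  also have "\<dots> = (\<Sum>a\<in>UNIV - {0::'a}. card (UNIV::'a set) - 2)"
    by (rule sum.cong) (auto simp: card_Diff_subset)
  also have "\<dots> = (card (UNIV::'a set) - 1) * (card (UNIV::'a set) - 2)" by simp
  finally have "card ?S = (card (UNIV::'a set) - 1) * (card (UNIV::'a set) - 2)" .
  moreover have "card ?S = (\<Sum>d\<in>Dset (2*v). card (OD (Tset v X d)))"
    by (rule card_SigmaI) (auto simp: finite_Dset)
  ultimately show ?thesis by simp
qed

end

lemma line_scale:
  assumes "(c::'a::field) \<noteq> 0"
  shows "line X (vscale c d) = line X d"
proof -
  have "vadd X (vscale t (vscale c d)) = vadd X (vscale (t*c) d)" for t
    by (simp add: vscale_vscale mult.commute)
  moreover have "vadd X (vscale t d) = vadd X (vscale (t/c) (vscale c d))" for t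
    using assms by (simp add: vscale_vscale)
  ultimately show ?thesis unfolding line_def by blast
qed

lemma line_eq_scale:
  assumes "length d = length X" "length d' = length X" "d' \<noteq> replicate (length X) 0"
    "line X d' = line X (d::'a::field list)"
  shows "\<exists>c. c \<noteq> 0 \<and> d' = vscale c d"
proof -
  have "vadd X (vscale 1 d') \<in> line X d" using assms(4) unfolding line_def by blast
  then obtain t where t: "vadd X (vscale 1 d') = vadd X (vscale t d)" unfolding line_def by blast
  have e: "d' = vscale t d"
  proof (rule nth_equalityI)
    show "length d' = length (vscale t d)" using assms by simp
    fix j assume j: "j < length d'"
    have "vadd X (vscale 1 d') ! j = vadd X (vscale t d) ! j" using t by simp
    thus "d' ! j = vscale t d ! j" using j assms by simp
  qed
  have "t \<noteq> 0"
  proof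
    assume "t = 0"
    hence "d' = replicate (length X) 0" using e assms by (auto intro!: nth_equalityI)
    with assms(3) show False by simp
  qed
  with e show ?thesis by blast
qed

lemma vscale_nonzero:
  assumes "d \<noteq> replicate (length d) 0" "(c::'a::field) \<noteq> 0"
  shows "vscale c d \<noteq> replicate (length d) 0"
proof
  assume h: "vscale c d = replicate (length d) 0"
  have "d = replicate (length d) 0"
  proof (rule nth_equalityI)
    fix j assume "j < length d"
    hence "vscale c d ! j = 0" using h by (metis length_vscale nth_replicate)
    thus "d!j = replicate (length d) 0 ! j" using assms \<open>j < length d\<close> by simp
  qed simp
  with assms show False by simp
qed

lemma vscale_inj:
  assumes "d \<noteq> replicate (length d) 0"
  shows "inj (\<lambda>c::'a::field. vscale c d)"
proof (rule injI)
  fix a b assume h: "vscale a d = vscale b d"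
  obtain j where j: "j < length d" "d!j \<noteq> 0"
    using assms by (metis in_set_conv_nth replicate_eqI)
  have "vscale a d ! j = vscale b d ! j" using h by simp
  thus "a = b" using j by simp
qed

context
  fixes v :: nat and X :: "'a::{finite,field} list"
  assumes char2: "(2::'a) = 0" and lenX: "length X = 2*v" and XnK: "X \<notin> setK v"
begin

definition "Dgood = {d \<in> Dset (2*v). line X d \<subseteq> setA v}"

lemma S_eq: "{L. ag_line (2*v) L \<and> X \<in> L \<and> L \<subseteq> setA v} = line X ` Dgood"
proof
  show "{L. ag_line (2*v) L \<and> X \<in> L \<and> L \<subseteq> setA v} \<subseteq> line X ` Dgood"
  proof
    fix L assume "L \<in> {L. ag_line (2*v) L \<and> X \<in> L \<and> L \<subseteq> setA v}"
    then obtain p d where L: "length p = 2*v" "length d = 2*v" "d \<noteq> replicate (2*v) 0"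
      "L = {vadd p (vscale t d) | t. True}" "X \<in> L" "L \<subseteq> setA v"
      unfolding ag_line_def by blast
    then obtain t0 where t0: "X = vadd p (vscale t0 d)" by blast
    have "L = line X d"
    proof
      show "L \<subseteq> line X d"
      proof
        fix y assume "y \<in> L"
        then obtain t where "y = vadd p (vscale t d)" using L by blast
        also have "\<dots> = vadd X (vscale (t - t0) d)" using t0 vadd_combine[of p d t0 "t-t0"] L by simp
        finally show "y \<in> line X d" unfolding line_def by blast
      qed
      show "line X d \<subseteq> L"
      proof
        fix y assume "y \<in> line X d"
        then obtain t where "y = vadd X (vscale t d)" unfolding line_def by blast
        also have "\<dots> = vadd p (vscale (t0 + t) d)" using t0 vadd_combine[of p d t0 t] L by simp
        finally show "y \<in> L" using L by blast
      qed
    qed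
    thus "L \<in> line X ` Dgood" using L by (auto simp: Dgood_def Dset_def)
  qed
  show "line X ` Dgood \<subseteq> {L. ag_line (2*v) L \<and> X \<in> L \<and> L \<subseteq> setA v}"
  proof
    fix L assume "L \<in> line X ` Dgood"
    then obtain d where d: "d \<in> Dgood" "L = line X d" by blast
    have "ag_line (2*v) L" using d lenX unfolding ag_line_def line_def Dgood_def Dset_def by blast
    moreover have "X \<in> L"
    proof -
      have "vadd X (vscale 0 d) = X" using d lenX by (intro vadd_zero) (simp add: Dgood_def Dset_def)
      thus ?thesis using d unfolding line_def by (metis (mono_tags, lifting) mem_Collect_eq)
    qed
    ultimately show "L \<in> {L. ag_line (2*v) L \<and> X \<in> L \<and> L \<subseteq> setA v}" using d by (auto simp: Dgood_def)
  qed
qed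

lemma fiber:
  assumes "d \<in> Dgood"
  shows "{d' \<in> Dgood. line X d' = line X d} = (\<lambda>c. vscale c d) ` (UNIV - {0})"
proof
  have ld: "length d = 2*v" "d \<noteq> replicate (2*v) 0" using assms by (auto simp: Dgood_def Dset_def)
  show "{d' \<in> Dgood. line X d' = line X d} \<subseteq> (\<lambda>c. vscale c d) ` (UNIV - {0})"
  proof
    fix d' assume "d' \<in> {d' \<in> Dgood. line X d' = line X d}"
    hence "length d' = 2*v" "d' \<noteq> replicate (2*v) 0" "line X d' = line X d"
      by (auto simp: Dgood_def Dset_def)
    then obtain c where "c \<noteq> 0" "d' = vscale c d" using line_eq_scale[of d X d'] ld lenX by auto
    thus "d' \<in> (\<lambda>c. vscale c d) ` (UNIV - {0})" by blast
  qed
  show "(\<lambda>c. vscale c d) ` (UNIV - {0}) \<subseteq> {d' \<in> Dgood. line X d' = line X d}"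
  proof
    fix d' assume "d' \<in> (\<lambda>c. vscale c d) ` (UNIV - {0})"
    then obtain c where c: "c \<noteq> 0" "d' = vscale c d" by blast
    have "d' \<noteq> replicate (2*v) 0" using vscale_nonzero[of d c] ld c by simp
    thus "d' \<in> {d' \<in> Dgood. line X d' = line X d}"
      using c assms ld line_scale[OF c(1)] by (auto simp: Dgood_def Dset_def)
  qed
qed

lemma card_Dgood:
  "card Dgood = (card (UNIV::'a set) - 1) * card {L. ag_line (2*v) L \<and> X \<in> L \<and> L \<subseteq> setA v}"
proof -
  have fin: "finite Dgood" using finite_Dset by (rule finite_subset[rotated]) (auto simp: Dgood_def)
  have U: "Dgood = (\<Union>L\<in>line X ` Dgood. {d' \<in> Dgood. line X d' = L})" by auto
  have "card Dgood = (\<Sum>L\<in>line X ` Dgood. card {d' \<in> Dgood. line X d' = L})"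
    by (subst U, rule card_UN_disjoint) (use fin in auto)
  also have "\<dots> = (\<Sum>L\<in>line X ` Dgood. card (UNIV::'a set) - 1)"
  proof (rule sum.cong)
    fix L assume "L \<in> line X ` Dgood"
    then obtain d where d: "d \<in> Dgood" "L = line X d" by blast
    have ld: "d \<noteq> replicate (length d) 0" using d by (auto simp: Dgood_def Dset_def)
    have "card {d' \<in> Dgood. line X d' = L} = card ((\<lambda>c. vscale c d) ` (UNIV - {0::'a}))"
      using fiber[OF d(1)] d(2) by simp
    also have "\<dots> = card (UNIV - {0::'a})"
      by (rule card_image) (use vscale_inj[OF ld] in \<open>auto simp: inj_on_def\<close>)
    finally show "card {d' \<in> Dgood. line X d' = L} = card (UNIV::'a set) - 1" by simp
  qed simp
  finally show ?thesis using S_eq by (simp add: mult.commute)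
qed

lemma good_iff:
  assumes "length d = 2*v"
  shows "line X d \<subseteq> setA v \<longleftrightarrow> Tset v X d = {}"
proof
  assume h: "line X d \<subseteq> setA v"
  show "Tset v X d = {}"
  proof (rule ccontr)
    assume "Tset v X d \<noteq> {}"
    then obtain t where "vadd X (vscale t d) \<in> setK v" by (auto simp: Tset_def)
    moreover have "vadd X (vscale t d) \<in> setA v" using h unfolding line_def by blast
    ultimately show False by (simp add: setA_def)
  qed
next
  assume h: "Tset v X d = {}"
  show "line X d \<subseteq> setA v"
  proof
    fix y assume "y \<in> line X d"
    then obtain t where y: "y = vadd X (vscale t d)" unfolding line_def by blast
    have "y \<notin> setK v"
    proof (cases "t = 0")
      case True
      then show ?thesis using y vadd_zero[of X d] lenX assms XnK by simp
    next
      case False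
      then show ?thesis using h y by (auto simp: Tset_def)
    qed
    thus "y \<in> setA v" using y lenX assms by (simp add: setA_def ag_points_def)
  qed
qed

end

theorem proposition12:
  fixes v q :: nat and X :: "'a::{finite,field} list"
  assumes "CHAR('a) = 2"
    and "q = card (UNIV :: 'a set)"
    and "v \<ge> 1"
    and "X \<in> setA v"
  shows "real (card {L :: 'a list set. ag_line (2*v) L \<and> X \<in> L \<and> L \<subseteq> setA v})
       = (real q ^ (2*v) - 1) / (real q - 1) - real q ^ v + (real q - 2) / 2"
proof -
  have "(of_nat CHAR('a)::'a) = 0" by simp
  hence char2: "(2::'a) = 0" using assms(1) by simp
  have lenX: "length X = 2*v" and XnK: "X \<notin> setK v"
    using assms(4) by (auto simp: setA_def ag_points_def)
  have q2: "q \<ge> 2"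
  proof -
    have "card {0::'a, 1} \<le> card (UNIV::'a set)" by (rule card_mono) auto
    thus ?thesis using assms(2) by simp
  qed
  let ?S = "{L :: 'a list set. ag_line (2*v) L \<and> X \<in> L \<and> L \<subseteq> setA v}"
  let ?D = "Dset (2*v) :: 'a list set"
  let ?T = "Tset v X"
  have finD: "finite ?D" by (rule finite_Dset)
  have G: "Dgood v X = {d \<in> ?D. ?T d = {}}"
    using good_iff[OF char2 lenX XnK] by (auto simp: Dgood_def[OF char2 lenX XnK] Dset_def)
  have "real (card (Dgood v X)) = (\<Sum>d\<in>?D. if ?T d = {} then 1 else 0)"
    unfolding G using finD by (simp add: sum.inter_filter[symmetric])
  also have "\<dots> = (\<Sum>d\<in>?D. 1 - (real (card (?T d)) - real (card (OD (?T d))) / 2))"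
    by (rule sum.cong) (auto simp: per_d[OF char2 lenX XnK] Dset_def)
  also have "\<dots> = real (card ?D) - real (\<Sum>d\<in>?D. card (?T d)) + real (\<Sum>d\<in>?D. card (OD (?T d))) / 2"
    by (simp add: sum_subtractf sum_divide_distrib sum.distrib)
  also have "\<dots> = (real q ^ (2*v) - 1) - (real q - 1) * real q ^ v + (real q - 1) * (real q - 2) / 2"
  proof -
    have "q ^ (2*v) \<ge> 1" using q2 by simp
    hence "real (card ?D) = real q ^ (2*v) - 1" using assms(2) by (simp add: card_Dset of_nat_diff)
    moreover have "real (\<Sum>d\<in>?D. card (?T d)) = (real q - 1) * real q ^ v"
      using sum_T[OF char2 lenX XnK] assms(2) q2 by (simp add: of_nat_diff)
    moreover have "real (\<Sum>d\<in>?D. card (OD (?T d))) = (real q - 1) * (real q - 2)"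
      using sum_OD[OF char2 lenX XnK] assms(2) q2 by (simp add: of_nat_diff)
    ultimately show ?thesis by simp
  qed
  finally have e1: "real (card (Dgood v X)) = (real q ^ (2*v) - 1) - (real q - 1) * real q ^ v + (real q - 1) * (real q - 2) / 2" .
  have e2: "real (card (Dgood v X)) = (real q - 1) * real (card ?S)"
    using card_Dgood[OF char2 lenX XnK] assms(2) q2 by (simp add: of_nat_diff)
  have qn: "real q - 1 \<noteq> 0" using q2 by simp
  have "real (card ?S) = ((real q ^ (2*v) - 1) - (real q - 1) * real q ^ v + (real q - 1) * (real q - 2) / 2) / (real q - 1)"
    using e1 e2 qn by (simp add: field_simps)
  also have "\<dots> = (real q ^ (2*v) - 1) / (real q - 1) - real q ^ v + (real q - 2) / 2"
    using qn by (simp add: field_simps)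
  finally show ?thesis .
qed

end
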